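(* Let $M\in U_q^+$ be a $q$-commutator monomial $M\in\bigcup_kP_k$, given as an iterated $q$-bracket expression in the generators $E_i$. Then $\pi_B^+(M)=0$ if and only if, in this expression, some application of the $q$-bracket $[X,Y]_q$ has arguments $X,Y$ of weights $\alpha,\beta$ with $\langle\alpha,\beta\rangle_B=0$. If no such application occurs, $\pi_B^+(M)\in\mathcal{P}_B^+$ is a nonzero monomial (nonzero scalar multiple of a monomial in the $e_i$).
   Context: $\mathfrak{g}$ is an untwisted affine Lie algebra with Cartan matrix $A=(a_{ij})$ (indices $i=0,\dots,\ell$); $d_i$ coprime positive integers with $c_{ij}=d_ia_{ij}=d_ja_{ji}$, invariant form normalized by $(\alpha_i,\alpha_j)=c_{ij}$. Choose $\sigma_{ij}\in\{\pm1\}$ for $i<j$ with $a_{ij}\ne0$ and put $b_{ij}=\sigma_{ij}c_{ij}$ ($i<j$), $b_{ii}=0$, $b_{ij}=-\sigma_{ji}c_{ij}$ ($i>j$). Let $\{\cdot,\cdot\}_B$ be the skew-symmetric bilinear form on the root lattice with $\{\alpha_i,\alpha_j\}_B=b_{ij}$, and $\langle\alpha,\beta\rangle_B:=(\alpha,\beta)-\{\alpha,\beta\}_B$. $\mathcal{P}_B^+$ is the $\mathbb{Q}(q)$-algebra generated by $e_i$ with $e_ie_j=q^{b_{ij}}e_je_i$, and $\pi_B^+:U_q^+\to\mathcal{P}_B^+$ is the weight-graded algebra surjection with $E_i\mapsto e_i$, where $U_q^+$ is the positive part of the quantum enveloping algebra $U_q(\mathfrak{g})$ (generated by $E_i$,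 weight of $E_i$ is $\alpha_i$). The $q$-bracket is $[x,y]_q=xy-q^{(\mu,\nu)}yx$ for $x,y$ of weights $\mu,\nu$. $P_0=\{E_i\}$, $P_{k+1}=\bigcup_{a,b\le k}\{[x,y]_q:x\in P_a,y\in P_b\}$. *)

theory Defs
  imports "HOL-Computational_Algebra.Polynomial" "HOL-Computational_Algebra.Fraction_Field"
begin

type_synonym qfield = "rat poly fract"

definition qv :: qfield where "qv = Fract [:0, 1:] 1"

definition gcm :: "nat \<Rightarrow> (nat \<Rightarrow> nat \<Rightarrow> int) \<Rightarrow> bool" where
  "gcm l A \<longleftrightarrow> (\<forall>i\<le>l. A i i = 2) \<and> (\<forall>i\<le>l. \<forall>j\<le>l. i \<noteq> j \<longrightarrow> A i j \<le> 0)
     \<and> (\<forall>i\<le>l. \<forall>j\<le>l. A i j = 0 \<longleftrightarrow> A j i = 0)"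

definition indecomposable :: "nat \<Rightarrow> (nat \<Rightarrow> nat \<Rightarrow> int) \<Rightarrow> bool" where
  "indecomposable l A \<longleftrightarrow>
     \<not> (\<exists>S. S \<noteq> {} \<and> S \<subset> {..l} \<and> (\<forall>i\<in>S. \<forall>j\<in>{..l} - S. A i j = 0))"

text \<open>For an indecomposable GCM, affine type is equivalent to the
  existence of a positive vector in the kernel (Kac, Cor. 4.3). Among affine matrices the
  untwisted ones are those having a node k with Kac label a_k = 1, dual label a_k^v = 1,
  and a_j^v \<le> a_j for all j (i.e. alpha_k is a longest simple root, (alpha_j,alpha_j) being
  proportional to a_j^v / a_j).\<close>

definition untwisted_affine_cartan :: "nat \<Rightarrow> (nat \<Rightarrow> nat \<Rightarrow> int) \<Rightarrow> bool" where
  "untwisted_affine_cartan l A \<longleftrightarrow> gcm l A \<and> indecomposable l A \<and>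
     (\<exists>k\<le>l. \<exists>a av :: nat \<Rightarrow> int.
        (\<forall>i\<le>l. a i > 0 \<and> av i > 0) \<and>
        (\<forall>i\<le>l. (\<Sum>j\<le>l. A i j * a j) = 0) \<and>
        (\<forall>j\<le>l. (\<Sum>i\<le>l. av i * A i j) = 0) \<and>
        a k = 1 \<and> av k = 1 \<and> (\<forall>j\<le>l. av j \<le> a j))"

definition symmetrizer :: "nat \<Rightarrow> (nat \<Rightarrow> nat \<Rightarrow> int) \<Rightarrow> (nat \<Rightarrow> int) \<Rightarrow> bool" where
  "symmetrizer l A d \<longleftrightarrow> (\<forall>i\<le>l. d i > 0) \<and> Gcd (d ` {..l}) = 1 \<and>
     (\<forall>i\<le>l. \<forall>j\<le>l. d i * A i j = d j * A j i)"

definition cmat :: "(nat \<Rightarrow> nat \<Rightarrow> int) \<Rightarrow> (nat \<Rightarrow> int) \<Rightarrow> nat \<Rightarrow> nat \<Rightarrow> int" where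
  "cmat A d i j = d i * A i j"

definition sign_choice :: "nat \<Rightarrow> (nat \<Rightarrow> nat \<Rightarrow> int) \<Rightarrow> (nat \<Rightarrow> nat \<Rightarrow> int) \<Rightarrow> bool" where
  "sign_choice l A \<sigma> \<longleftrightarrow> (\<forall>i\<le>l. \<forall>j\<le>l. i < j \<and> A i j \<noteq> 0 \<longrightarrow> \<sigma> i j \<in> {1, -1})"

definition bmat :: "(nat \<Rightarrow> nat \<Rightarrow> int) \<Rightarrow> (nat \<Rightarrow> int) \<Rightarrow> (nat \<Rightarrow> nat \<Rightarrow> int) \<Rightarrow> nat \<Rightarrow> nat \<Rightarrow> int" where
  "bmat A d \<sigma> i j = (if i < j then \<sigma> i j * cmat A d i j
                      else if i = j then 0 else - \<sigma> j i * cmat A d i j)"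

section \<open>Forms on the root lattice (elements = coefficient vectors w.r.t. alpha_0..alpha_l)\<close>

definition sform :: "nat \<Rightarrow> (nat \<Rightarrow> nat \<Rightarrow> int) \<Rightarrow> (nat \<Rightarrow> int) \<Rightarrow> (nat \<Rightarrow> int) \<Rightarrow> (nat \<Rightarrow> int) \<Rightarrow> int" where
  "sform l A d x y = (\<Sum>i\<le>l. \<Sum>j\<le>l. x i * y j * cmat A d i j)"

definition bform :: "nat \<Rightarrow> (nat \<Rightarrow> nat \<Rightarrow> int) \<Rightarrow> (nat \<Rightarrow> int) \<Rightarrow> (nat \<Rightarrow> nat \<Rightarrow> int)
    \<Rightarrow> (nat \<Rightarrow> int) \<Rightarrow> (nat \<Rightarrow> int) \<Rightarrow> int" where
  "bform l A d \<sigma> x y = (\<Sum>i\<le>l. \<Sum>j\<le>l. x i * y j * bmat A d \<sigma> i j)"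

definition angle_form :: "nat \<Rightarrow> (nat \<Rightarrow> nat \<Rightarrow> int) \<Rightarrow> (nat \<Rightarrow> int) \<Rightarrow> (nat \<Rightarrow> nat \<Rightarrow> int)
    \<Rightarrow> (nat \<Rightarrow> int) \<Rightarrow> (nat \<Rightarrow> int) \<Rightarrow> int" where
  "angle_form l A d \<sigma> x y = sform l A d x y - bform l A d \<sigma> x y"

section \<open>q-commutator monomials (iterated q-bracket expressions in the E_i)\<close>

datatype qexpr = Gen nat | Br qexpr qexpr

text \<open>M belongs to the union of the P_k (all generators among E_0..E_l).\<close>
fun qexpr_over :: "nat \<Rightarrow> qexpr \<Rightarrow> bool" where
  "qexpr_over l (Gen i) = (i \<le> l)"
| "qexpr_over l (Br x y) = (qexpr_over l x \<and> qexpr_over l y)"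

fun wt :: "qexpr \<Rightarrow> nat \<Rightarrow> int" where
  "wt (Gen i) = (\<lambda>j. if j = i then 1 else 0)"
| "wt (Br x y) = (\<lambda>j. wt x j + wt y j)"

fun degenerate_bracket :: "nat \<Rightarrow> (nat \<Rightarrow> nat \<Rightarrow> int) \<Rightarrow> (nat \<Rightarrow> int) \<Rightarrow> (nat \<Rightarrow> nat \<Rightarrow> int)
    \<Rightarrow> qexpr \<Rightarrow> bool" where
  "degenerate_bracket l A d \<sigma> (Gen i) = False"
| "degenerate_bracket l A d \<sigma> (Br x y) =
     (angle_form l A d \<sigma> (wt x) (wt y) = 0
      \<or> degenerate_bracket l A d \<sigma> x \<or> degenerate_bracket l A d \<sigma> y)"

section \<open>Free algebra on E_i (words) -- U_q^+ is its quotient by the quantum Serre relations\<close>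

type_synonym freealg = "nat list \<Rightarrow> qfield"

definition fgen :: "nat \<Rightarrow> freealg" where
  "fgen i = (\<lambda>w. if w = [i] then 1 else 0)"

definition fmul :: "freealg \<Rightarrow> freealg \<Rightarrow> freealg" where
  "fmul f g = (\<lambda>w. \<Sum>k\<le>length w. f (take k w) * g (drop k w))"

fun feval :: "nat \<Rightarrow> (nat \<Rightarrow> nat \<Rightarrow> int) \<Rightarrow> (nat \<Rightarrow> int) \<Rightarrow> qexpr \<Rightarrow> freealg" where
  "feval l A d (Gen i) = fgen i"
| "feval l A d (Br x y) =
     (\<lambda>w. fmul (feval l A d x) (feval l A d y) w
          - qv powi (sform l A d (wt x) (wt y)) * fmul (feval l A d y) (feval l A d x) w)"

section \<open>The quantum affine space P_B^+: basis of ordered monomials e_0^{a_0}...e_l^{a_l}\<close>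

type_synonym palg = "(nat \<Rightarrow> nat) \<Rightarrow> qfield"

text \<open>e^a e^b = q^(twist a b) e^(a+b).\<close>
definition twist :: "nat \<Rightarrow> (nat \<Rightarrow> nat \<Rightarrow> int) \<Rightarrow> (nat \<Rightarrow> int) \<Rightarrow> (nat \<Rightarrow> nat \<Rightarrow> int)
    \<Rightarrow> (nat \<Rightarrow> nat) \<Rightarrow> (nat \<Rightarrow> nat) \<Rightarrow> int" where
  "twist l A d \<sigma> a b = (\<Sum>i\<le>l. \<Sum>j<i. int (a i) * int (b j) * bmat A d \<sigma> i j)"

definition pmul :: "nat \<Rightarrow> (nat \<Rightarrow> nat \<Rightarrow> int) \<Rightarrow> (nat \<Rightarrow> int) \<Rightarrow> (nat \<Rightarrow> nat \<Rightarrow> int)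
    \<Rightarrow> palg \<Rightarrow> palg \<Rightarrow> palg" where
  "pmul l A d \<sigma> f g = (\<lambda>c. \<Sum>a\<in>{a. \<forall>i. a i \<le> c i}.
       qv powi (twist l A d \<sigma> a (\<lambda>i. c i - a i)) * f a * g (\<lambda>i. c i - a i))"

definition pone :: palg where "pone = (\<lambda>c. if c = (\<lambda>_. 0) then 1 else 0)"

definition pgen :: "nat \<Rightarrow> palg" where
  "pgen i = (\<lambda>c. if c = (\<lambda>j. if j = i then 1 else 0) then 1 else 0)"

definition pmono :: "nat \<Rightarrow> (nat \<Rightarrow> nat \<Rightarrow> int) \<Rightarrow> (nat \<Rightarrow> int) \<Rightarrow> (nat \<Rightarrow> nat \<Rightarrow> int)
    \<Rightarrow> nat list \<Rightarrow> palg" where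
  "pmono l A d \<sigma> w = foldr (\<lambda>i p. pmul l A d \<sigma> (pgen i) p) w pone"

text \<open>The algebra map E_i \<mapsto> e_i from the free algebra (through which pi_B^+ factors).\<close>
definition pi_free :: "nat \<Rightarrow> (nat \<Rightarrow> nat \<Rightarrow> int) \<Rightarrow> (nat \<Rightarrow> int) \<Rightarrow> (nat \<Rightarrow> nat \<Rightarrow> int)
    \<Rightarrow> freealg \<Rightarrow> palg" where
  "pi_free l A d \<sigma> f = (\<lambda>c. \<Sum>w\<in>{w. f w \<noteq> 0}. f w * pmono l A d \<sigma> w c)"

definition piB :: "nat \<Rightarrow> (nat \<Rightarrow> nat \<Rightarrow> int) \<Rightarrow> (nat \<Rightarrow> int) \<Rightarrow> (nat \<Rightarrow> nat \<Rightarrow> int)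
    \<Rightarrow> qexpr \<Rightarrow> palg" where
  "piB l A d \<sigma> M = pi_free l A d \<sigma> (feval l A d M)"

end

theory Submission
  imports Defs
begin

lemma qv_nz: "qv \<noteq> 0"
  by (simp add: qv_def Zero_fract_def eq_fract)

lemma qv_pow_nat: "qv ^ n = Fract (monom 1 n) 1"
proof (induction n)
  case 0 then show ?case by (simp add: One_fract_def)
next
  case (Suc n) then show ?case by (simp add: qv_def monom_Suc monom_Suc mult.commute)
qed

lemma qv_pow_eq1: "qv ^ n = 1 \<Longrightarrow> n = 0"
proof -
  assume "qv ^ n = 1"
  hence "Fract (monom (1::rat) n) 1 = Fract 1 1" by (simp add: qv_pow_nat One_fract_def)
  hence "monom (1::rat) n = 1" by (simp add: eq_fract)
  hence "degree (monom (1::rat) n) = 0" by simp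
  thus "n = 0" by (simp add: degree_monom_eq)
qed

lemma qv_powi_inj: "qv powi m = qv powi n \<Longrightarrow> m = n"
proof (rule ccontr)
  assume h: "qv powi m = qv powi n" "m \<noteq> n"
  { fix a b :: int assume e: "qv powi a = qv powi b" "a < b"
    have "qv powi b = qv powi a * qv powi (b - a)"
      using power_int_add[of qv a "b - a"] qv_nz by simp
    hence "qv powi (b - a) = 1" using e qv_nz by (simp add: power_int_eq_0_iff)
    hence "qv ^ nat (b - a) = 1" using e(2) by (simp add: power_int_def)
    hence False using qv_pow_eq1 e(2) by fastforce }
  thus False using h by (metis linorder_neq_iff)
qed

definition delta :: "(nat \<Rightarrow> nat) \<Rightarrow> palg" where
  "delta a = (\<lambda>c. if c = a then 1 else 0)"

fun cntw :: "nat list \<Rightarrow> nat \<Rightarrow> nat" where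
  "cntw [] = (\<lambda>_. 0)"
| "cntw (i # w) = (\<lambda>j. (if j = i then 1 else 0) + cntw w j)"

fun tw :: "nat \<Rightarrow> (nat \<Rightarrow> nat \<Rightarrow> int) \<Rightarrow> (nat \<Rightarrow> int) \<Rightarrow> (nat \<Rightarrow> nat \<Rightarrow> int) \<Rightarrow> nat list \<Rightarrow> int" where
  "tw l A d \<sigma> [] = 0"
| "tw l A d \<sigma> (i # w) = twist l A d \<sigma> (\<lambda>j. if j = i then 1 else 0) (cntw w) + tw l A d \<sigma> w"

lemma cntw_supp: "cntw w j \<noteq> 0 \<Longrightarrow> j \<in> set w"
  by (induction w) (auto split: if_splits)

lemma cntw_fin: "finite {j. cntw w j \<noteq> 0}"
  by (rule finite_subset[of _ "set w"]) (auto intro: cntw_supp)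

lemma cntw_append: "cntw (u @ v) = (\<lambda>j. cntw u j + cntw v j)"
  by (induction u) auto

lemma finite_below:
  assumes "finite {i. c i \<noteq> (0::nat)}"
  shows "finite {a. \<forall>i. a i \<le> c i}"
proof -
  let ?S = "{i. c i \<noteq> 0}"
  have "{a. \<forall>i. a i \<le> c i} \<subseteq> {f. \<forall>x. (x \<in> ?S \<longrightarrow> f x \<in> {..Max (c ` ?S)}) \<and> (x \<notin> ?S \<longrightarrow> f x = 0)}"
  proof (intro subsetI CollectI allI conjI impI)
    fix a x assume h: "a \<in> {a. \<forall>i. a i \<le> c i}" "x \<in> ?S"
    have "c x \<le> Max (c ` ?S)" using assms h(2) by (intro Max_ge) auto
    moreover have "a x \<le> c x" using h(1) by simp
    ultimately show "a x \<in> {..Max (c ` ?S)}" by simp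
  next
    fix a x assume h: "a \<in> {a. \<forall>i. a i \<le> c i}" "x \<notin> ?S"
    have "a x \<le> c x" using h(1) by simp
    moreover have "c x = 0" using h(2) by simp
    ultimately have "a x \<le> 0" by simp
    thus "a x = 0" by simp
  qed
  moreover have "finite {f. \<forall>x. (x \<in> ?S \<longrightarrow> f x \<in> {..Max (c ` ?S)}) \<and> (x \<notin> ?S \<longrightarrow> f x = 0)}"
    by (rule finite_set_of_finite_funs) (use assms in auto)
  ultimately show ?thesis by (rule finite_subset)
qed

lemma pmul_delta:
  assumes fa: "finite {i. a i \<noteq> (0::nat)}" and fb: "finite {i. b i \<noteq> (0::nat)}"
  shows "pmul l A d \<sigma> (\<lambda>c. x * delta a c) (\<lambda>c. y * delta b c)
       = (\<lambda>c. x * y * qv powi twist l A d \<sigma> a b * delta (\<lambda>i. a i + b i) c)"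
proof
  fix c
  show "pmul l A d \<sigma> (\<lambda>c. x * delta a c) (\<lambda>c. y * delta b c) c
       = x * y * qv powi twist l A d \<sigma> a b * delta (\<lambda>i. a i + b i) c"
  proof (cases "c = (\<lambda>i. a i + b i)")
    case True
    have fc: "finite {i. c i \<noteq> 0}"
      by (rule finite_subset[of _ "{i. a i \<noteq> 0} \<union> {i. b i \<noteq> 0}"]) (use True fa fb in auto)
    have sub: "(\<lambda>i. c i - a i) = b" using True by auto
    have "pmul l A d \<sigma> (\<lambda>c. x * delta a c) (\<lambda>c. y * delta b c) c
        = (\<Sum>a'\<in>{a. \<forall>i. a i \<le> c i}. if a' = a then x * y * qv powi twist l A d \<sigma> a b else 0)"
      unfolding pmul_def by (intro sum.cong refl) (auto simp: delta_def sub)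
    also have "\<dots> = x * y * qv powi twist l A d \<sigma> a b"
      using finite_below[OF fc] True by (simp add: sum.delta)
    finally show ?thesis using True by (simp add: delta_def)
  next
    case False
    have "pmul l A d \<sigma> (\<lambda>c. x * delta a c) (\<lambda>c. y * delta b c) c = 0"
      unfolding pmul_def
    proof (intro sum.neutral ballI)
      fix a' assume "a' \<in> {a. \<forall>i. a i \<le> c i}"
      hence le: "\<forall>i. a' i \<le> c i" by simp
      have "a' \<noteq> a \<or> (\<lambda>i. c i - a' i) \<noteq> b"
      proof (rule ccontr)
        assume "\<not> ?thesis"
        hence "a' = a" "(\<lambda>i. c i - a' i) = b" by auto
        hence "c = (\<lambda>i. a i + b i)" using le by (auto simp: fun_eq_iff) (metis add_diff_inverse_nat not_le)
        thus False using False by simp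
      qed
      thus "qv powi twist l A d \<sigma> a' (\<lambda>i. c i - a' i) * (x * delta a a') * (y * delta b (\<lambda>i. c i - a' i)) = 0"
        by (auto simp: delta_def)
    qed
    thus ?thesis using False by (simp add: delta_def)
  qed
qed

lemma pmono_eq: "pmono l A d \<sigma> w = (\<lambda>c. qv powi tw l A d \<sigma> w * delta (cntw w) c)"
proof (induction w)
  case Nil
  then show ?case by (auto simp: pmono_def pone_def delta_def fun_eq_iff)
next
  case (Cons i w)
  have g: "pgen i = (\<lambda>c. 1 * delta (\<lambda>j. if j = i then 1 else 0) c)"
    by (simp add: pgen_def delta_def fun_eq_iff)
  have f1: "finite {j. (if j = i then 1 else 0) \<noteq> (0::nat)}" by simp
  have "pmono l A d \<sigma> (i # w) = pmul l A d \<sigma> (pgen i) (pmono l A d \<sigma> w)"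
    by (simp add: pmono_def)
  also have "\<dots> = (\<lambda>c. qv powi tw l A d \<sigma> w * qv powi twist l A d \<sigma> (\<lambda>j. if j = i then 1 else 0) (cntw w) * delta (cntw (i # w)) c)"
    unfolding g Cons by (subst pmul_delta[OF f1 cntw_fin]) simp
  also have "\<dots> = (\<lambda>c. qv powi tw l A d \<sigma> (i # w) * delta (cntw (i # w)) c)"
    by (simp add: power_int_add qv_nz mult.commute)
  finally show ?case .
qed


lemma twist_add2: "twist l A d \<sigma> a (\<lambda>j. b j + c j) = twist l A d \<sigma> a b + twist l A d \<sigma> a c"
  unfolding twist_def by (simp add: algebra_simps sum.distrib)

lemma twist_add1: "twist l A d \<sigma> (\<lambda>j. a j + b j) c = twist l A d \<sigma> a c + twist l A d \<sigma> b c"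
  unfolding twist_def by (simp add: algebra_simps sum.distrib)

lemma tw_append: "tw l A d \<sigma> (u @ v) = tw l A d \<sigma> u + tw l A d \<sigma> v + twist l A d \<sigma> (cntw u) (cntw v)"
proof (induction u)
  case Nil
  then show ?case by (simp add: twist_def)
next
  case (Cons i u)
  show ?case
    by (simp add: Cons cntw_append twist_add1 twist_add2)
qed

definition Ssc :: "nat \<Rightarrow> (nat \<Rightarrow> nat \<Rightarrow> int) \<Rightarrow> (nat \<Rightarrow> int) \<Rightarrow> (nat \<Rightarrow> nat \<Rightarrow> int) \<Rightarrow> freealg \<Rightarrow> qfield" where
  "Ssc l A d \<sigma> f = (\<Sum>w\<in>{w. f w \<noteq> 0}. f w * qv powi tw l A d \<sigma> w)"

lemma Ssc_super:
  assumes "finite W" "{w. f w \<noteq> 0} \<subseteq> W"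
  shows "Ssc l A d \<sigma> f = (\<Sum>w\<in>W. f w * qv powi tw l A d \<sigma> w)"
  unfolding Ssc_def using assms by (intro sum.mono_neutral_left) auto

lemma fmul_expand:
  assumes "finite F" "finite G" "{w. f w \<noteq> 0} \<subseteq> F" "{w. g w \<noteq> 0} \<subseteq> G"
  shows "fmul f g w = (\<Sum>p\<in>{p\<in>F \<times> G. fst p @ snd p = w}. f (fst p) * g (snd p))"
proof -
  let ?K = "(\<lambda>k. (take k w, drop k w)) ` {..length w}"
  have inj: "inj_on (\<lambda>k. (take k w, drop k w)) {..length w}"
    by (rule inj_onI) (metis atMost_iff length_take min.absorb2 prod.inject)
  have "fmul f g w = (\<Sum>p\<in>?K. f (fst p) * g (snd p))"
    unfolding fmul_def by (subst sum.reindex[OF inj]) simp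
  also have "\<dots> = (\<Sum>p\<in>?K \<inter> (F \<times> G). f (fst p) * g (snd p))"
    using assms by (intro sum.mono_neutral_right) auto
  also have "?K \<inter> (F \<times> G) = {p\<in>F \<times> G. fst p @ snd p = w}"
  proof (intro equalityI subsetI)
    fix p assume "p \<in> ?K \<inter> (F \<times> G)" thus "p \<in> {p\<in>F \<times> G. fst p @ snd p = w}" by auto
  next
    fix p assume h: "p \<in> {p\<in>F \<times> G. fst p @ snd p = w}"
    obtain u v where p: "p = (u, v)" by (cases p)
    have "u @ v = w" "u \<in> F" "v \<in> G" using h p by auto
    hence "p = (take (length u) w, drop (length u) w)" "length u \<in> {..length w}" using p by auto
    thus "p \<in> ?K \<inter> (F \<times> G)" using h by blast
  qed
  finally show ?thesis .
qed

lemma fmul_supp: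
  assumes "fmul f g w \<noteq> 0"
  shows "\<exists>u v. w = u @ v \<and> f u \<noteq> 0 \<and> g v \<noteq> 0"
proof -
  from assms obtain k where "f (take k w) * g (drop k w) \<noteq> 0"
    unfolding fmul_def by (meson sum.not_neutral_contains_not_neutral)
  thus ?thesis by (intro exI[of _ "take k w"] exI[of _ "drop k w"]) auto
qed

lemma Ssc_fmul:
  assumes fF: "finite {w. f w \<noteq> 0}" and fG: "finite {w. g w \<noteq> 0}"
    and ha: "\<And>u. f u \<noteq> 0 \<Longrightarrow> cntw u = a" and hb: "\<And>v. g v \<noteq> 0 \<Longrightarrow> cntw v = b"
  shows "Ssc l A d \<sigma> (fmul f g) = Ssc l A d \<sigma> f * Ssc l A d \<sigma> g * qv powi twist l A d \<sigma> a b"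
proof -
  let ?F = "{w. f w \<noteq> 0}" and ?G = "{w. g w \<noteq> 0}"
  let ?c = "\<lambda>p. fst p @ snd p"
  let ?W = "?c ` (?F \<times> ?G)"
  let ?h = "\<lambda>p. f (fst p) * g (snd p) * qv powi tw l A d \<sigma> (?c p)"
  have fW: "finite ?W" using fF fG by simp
  have sW: "{w. fmul f g w \<noteq> 0} \<subseteq> ?W"
  proof
    fix w assume "w \<in> {w. fmul f g w \<noteq> 0}"
    then obtain u v where "w = u @ v" "f u \<noteq> 0" "g v \<noteq> 0" using fmul_supp by blast
    thus "w \<in> ?W" by force
  qed
  have "Ssc l A d \<sigma> (fmul f g) = (\<Sum>w\<in>?W. fmul f g w * qv powi tw l A d \<sigma> w)"
    by (rule Ssc_super[OF fW sW])
  also have "\<dots> = (\<Sum>w\<in>?W. \<Sum>p\<in>{p\<in>?F \<times> ?G. ?c p = w}. ?h p)"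
    by (intro sum.cong refl, subst fmul_expand[OF fF fG], simp_all add: sum_distrib_right)
  also have "\<dots> = (\<Sum>p\<in>?F \<times> ?G. ?h p)"
    by (rule sum.group) (use fF fG in auto)
  also have "\<dots> = (\<Sum>p\<in>?F \<times> ?G. (f (fst p) * qv powi tw l A d \<sigma> (fst p)) * (g (snd p) * qv powi tw l A d \<sigma> (snd p)) * qv powi twist l A d \<sigma> a b)"
    by (intro sum.cong refl) (auto simp: tw_append power_int_add qv_nz ha hb)
  also have "\<dots> = Ssc l A d \<sigma> f * Ssc l A d \<sigma> g * qv powi twist l A d \<sigma> a b"
    unfolding Ssc_def sum_distrib_right[symmetric] sum_product sum.cartesian_product by (simp add: case_prod_unfold)
  finally show ?thesis .
qed


lemma skew_sum:
  fixes B :: "nat \<Rightarrow> nat \<Rightarrow> int" and x y :: "nat \<Rightarrow> int"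
  assumes "\<forall>i\<le>n. \<forall>j<i. B i j = - B j i" "\<forall>i\<le>n. B i i = 0"
  shows "(\<Sum>i\<le>n. \<Sum>j<i. x i * y j * B i j) - (\<Sum>i\<le>n. \<Sum>j<i. y i * x j * B i j)
       = (\<Sum>i\<le>n. \<Sum>j\<le>n. x i * y j * B i j)"
  using assms
proof (induction n)
  case 0
  then show ?case by simp
next
  case (Suc n)
  have IH: "(\<Sum>i\<le>n. \<Sum>j<i. x i * y j * B i j) - (\<Sum>i\<le>n. \<Sum>j<i. y i * x j * B i j)
       = (\<Sum>i\<le>n. \<Sum>j\<le>n. x i * y j * B i j)" using Suc by simp
  have sk: "\<And>j. j \<le> n \<Longrightarrow> B j (Suc n) = - B (Suc n) j" using Suc.prems(1) by fastforce
  have d: "B (Suc n) (Suc n) = 0" using Suc.prems(2) by simp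
  have "(\<Sum>i\<le>Suc n. \<Sum>j\<le>Suc n. x i * y j * B i j)
      = (\<Sum>i\<le>n. \<Sum>j\<le>n. x i * y j * B i j) + (\<Sum>i\<le>n. x i * y (Suc n) * B i (Suc n))
        + (\<Sum>j\<le>n. x (Suc n) * y j * B (Suc n) j)"
    by (simp add: sum.distrib d)
  also have "(\<Sum>i\<le>n. x i * y (Suc n) * B i (Suc n)) = - (\<Sum>j\<le>n. y (Suc n) * x j * B (Suc n) j)"
    by (simp add: sk sum_negf[symmetric] algebra_simps)
  finally show ?case using IH by (simp add: lessThan_Suc_atMost algebra_simps)
qed

fun flat :: "qexpr \<Rightarrow> nat list" where
  "flat (Gen i) = [i]"
| "flat (Br x y) = flat x @ flat y"

lemma wt_flat: "wt M = (\<lambda>j. int (cntw (flat M) j))"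
  by (induction M) (auto simp: cntw_append)

lemma flat_over: "qexpr_over l M \<Longrightarrow> set (flat M) \<subseteq> {..l}"
  by (induction M) auto

lemma twist_skew:
  assumes sym: "\<forall>i\<le>l. \<forall>j\<le>l. cmat A d i j = cmat A d j i"
  shows "twist l A d \<sigma> a b - twist l A d \<sigma> b a
     = bform l A d \<sigma> (\<lambda>j. int (a j)) (\<lambda>j. int (b j))"
proof -
  have "\<forall>i\<le>l. \<forall>j<i. bmat A d \<sigma> i j = - bmat A d \<sigma> j i"
    using sym by (auto simp: bmat_def)
  moreover have "\<forall>i\<le>l. bmat A d \<sigma> i i = 0" by (simp add: bmat_def)
  ultimately show ?thesis
    unfolding twist_def bform_def
    using skew_sum[of l "bmat A d \<sigma>" "\<lambda>j. int (a j)" "\<lambda>j. int (b j)"] by simp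
qed

lemma main_lemma:
  assumes sym: "\<forall>i\<le>l. \<forall>j\<le>l. cmat A d i j = cmat A d j i"
  shows "finite {w. feval l A d M w \<noteq> 0} \<and> (\<forall>w. feval l A d M w \<noteq> 0 \<longrightarrow> cntw w = cntw (flat M))
     \<and> (Ssc l A d \<sigma> (feval l A d M) = 0 \<longleftrightarrow> degenerate_bracket l A d \<sigma> M)"
proof (induction M)
  case (Gen i)
  have s: "{w. fgen i w \<noteq> 0} = {[i]}" by (auto simp: fgen_def)
  show ?case by (simp add: s Ssc_def fgen_def qv_nz)
next
  case (Br x y)
  define fx where "fx = feval l A d x"
  define fy where "fy = feval l A d y"
  define a where "a = cntw (flat x)"
  define b where "b = cntw (flat y)"
  define s where "s = sform l A d (wt x) (wt y)"
  define Sx where "Sx = Ssc l A d \<sigma> fx"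
  define Sy where "Sy = Ssc l A d \<sigma> fy"
  let ?c = "\<lambda>p. fst p @ snd p"
  let ?Fx = "{w. fx w \<noteq> 0}" and ?Fy = "{w. fy w \<noteq> 0}"
  define W where "W = ?c ` (?Fx \<times> ?Fy) \<union> ?c ` (?Fy \<times> ?Fx)"
  have fFx: "finite ?Fx" and fFy: "finite ?Fy" using Br by (auto simp: fx_def fy_def)
  have hx: "\<And>u. fx u \<noteq> 0 \<Longrightarrow> cntw u = a" and hy: "\<And>u. fy u \<noteq> 0 \<Longrightarrow> cntw u = b"
    using Br by (auto simp: fx_def fy_def a_def b_def)
  have Sxz: "Sx = 0 \<longleftrightarrow> degenerate_bracket l A d \<sigma> x" using Br by (simp add: Sx_def fx_def)
  have Syz: "Sy = 0 \<longleftrightarrow> degenerate_bracket l A d \<sigma> y" using Br by (simp add: Sy_def fy_def)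
  have fW: "finite W" using fFx fFy by (simp add: W_def)
  have s1: "{w. fmul fx fy w \<noteq> 0} \<subseteq> W"
  proof
    fix w assume "w \<in> {w. fmul fx fy w \<noteq> 0}"
    then obtain u v where "w = u @ v" "fx u \<noteq> 0" "fy v \<noteq> 0" using fmul_supp by blast
    thus "w \<in> W" unfolding W_def by force
  qed
  have s2: "{w. fmul fy fx w \<noteq> 0} \<subseteq> W"
  proof
    fix w assume "w \<in> {w. fmul fy fx w \<noteq> 0}"
    then obtain u v where "w = u @ v" "fy u \<noteq> 0" "fx v \<noteq> 0" using fmul_supp by blast
    thus "w \<in> W" unfolding W_def by force
  qed
  have fe: "feval l A d (Br x y) = (\<lambda>w. fmul fx fy w - qv powi s * fmul fy fx w)"
    by (simp add: fx_def fy_def s_def)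
  have sB: "{w. feval l A d (Br x y) w \<noteq> 0} \<subseteq> W"
  proof
    fix w assume h: "w \<in> {w. feval l A d (Br x y) w \<noteq> 0}"
    show "w \<in> W"
    proof (rule ccontr)
      assume "w \<notin> W"
      hence "fmul fx fy w = 0" "fmul fy fx w = 0" using s1 s2 by blast+
      thus False using h unfolding fe by simp
    qed
  qed
  have fin: "finite {w. feval l A d (Br x y) w \<noteq> 0}" using finite_subset[OF sB fW] .
  have hom: "\<forall>w. feval l A d (Br x y) w \<noteq> 0 \<longrightarrow> cntw w = cntw (flat (Br x y))"
  proof (intro allI impI)
    fix w assume "feval l A d (Br x y) w \<noteq> 0"
    hence "fmul fx fy w \<noteq> 0 \<or> fmul fy fx w \<noteq> 0" unfolding fe by auto
    then obtain u v where "w = u @ v" "(cntw u = a \<and> cntw v = b) \<or> (cntw u = b \<and> cntw v = a)"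
      using fmul_supp hx hy by metis
    thus "cntw w = cntw (flat (Br x y))"
      by (auto simp: cntw_append a_def b_def fun_eq_iff)
  qed
  have "Ssc l A d \<sigma> (feval l A d (Br x y))
      = (\<Sum>w\<in>W. (fmul fx fy w - qv powi s * fmul fy fx w) * qv powi tw l A d \<sigma> w)"
    using Ssc_super[OF fW sB] unfolding fe by simp
  also have "\<dots> = (\<Sum>w\<in>W. fmul fx fy w * qv powi tw l A d \<sigma> w)
       - qv powi s * (\<Sum>w\<in>W. fmul fy fx w * qv powi tw l A d \<sigma> w)"
    by (simp add: algebra_simps sum_subtractf sum_distrib_left)
  also have "\<dots> = Ssc l A d \<sigma> (fmul fx fy) - qv powi s * Ssc l A d \<sigma> (fmul fy fx)"
    using Ssc_super[OF fW s1] Ssc_super[OF fW s2] by simp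
  also have "\<dots> = Sx * Sy * (qv powi twist l A d \<sigma> a b - qv powi (s + twist l A d \<sigma> b a))"
    using Ssc_fmul[OF fFx fFy hx hy] Ssc_fmul[OF fFy fFx hy hx]
    by (simp add: Sx_def Sy_def power_int_add qv_nz algebra_simps)
  finally have SB: "Ssc l A d \<sigma> (feval l A d (Br x y))
      = Sx * Sy * (qv powi twist l A d \<sigma> a b - qv powi (s + twist l A d \<sigma> b a))" .
  have "qv powi twist l A d \<sigma> a b - qv powi (s + twist l A d \<sigma> b a) = 0
      \<longleftrightarrow> twist l A d \<sigma> a b = s + twist l A d \<sigma> b a"
    using qv_powi_inj by auto
  also have "\<dots> \<longleftrightarrow> angle_form l A d \<sigma> (wt x) (wt y) = 0"
    using twist_skew[OF sym, of \<sigma> a b]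
    by (auto simp: angle_form_def s_def wt_flat a_def b_def)
  finally have "Ssc l A d \<sigma> (feval l A d (Br x y)) = 0 \<longleftrightarrow> degenerate_bracket l A d \<sigma> (Br x y)"
    using SB Sxz Syz by auto
  thus ?case using fin hom by blast
qed


lemma pi_free_hom:
  assumes "\<And>w. f w \<noteq> 0 \<Longrightarrow> cntw w = a"
  shows "pi_free l A d \<sigma> f = (\<lambda>c. Ssc l A d \<sigma> f * delta a c)"
proof
  fix c
  have "pi_free l A d \<sigma> f c = (\<Sum>w\<in>{w. f w \<noteq> 0}. f w * qv powi tw l A d \<sigma> w * delta a c)"
    unfolding pi_free_def pmono_eq using assms by (intro sum.cong refl) auto
  thus "pi_free l A d \<sigma> f c = Ssc l A d \<sigma> f * delta a c"
    by (simp add: Ssc_def sum_distrib_right)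
qed

theorem mainTheorem9:
  fixes l :: nat and A :: "nat \<Rightarrow> nat \<Rightarrow> int" and d :: "nat \<Rightarrow> int"
    and \<sigma> :: "nat \<Rightarrow> nat \<Rightarrow> int" and M :: qexpr
  assumes "untwisted_affine_cartan l A"
    and "symmetrizer l A d"
    and "sign_choice l A \<sigma>"
    and "qexpr_over l M"
  shows "(piB l A d \<sigma> M = (\<lambda>_. 0) \<longleftrightarrow> degenerate_bracket l A d \<sigma> M)
    \<and> (\<not> degenerate_bracket l A d \<sigma> M \<longrightarrow>
         (\<exists>c w. c \<noteq> 0 \<and> set w \<subseteq> {..l} \<and> piB l A d \<sigma> M = (\<lambda>x. c * pmono l A d \<sigma> w x)))"
proof -
  have sym: "\<forall>i\<le>l. \<forall>j\<le>l. cmat A d i j = cmat A d j i"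
    using assms(2) by (simp add: symmetrizer_def cmat_def)
  note mainl = main_lemma[OF sym, of M \<sigma>]
  define S where "S = Ssc l A d \<sigma> (feval l A d M)"
  define a where "a = cntw (flat M)"
  have P: "piB l A d \<sigma> M = (\<lambda>c. S * delta a c)"
    unfolding piB_def S_def a_def by (rule pi_free_hom) (use mainl in blast)
  have z: "piB l A d \<sigma> M = (\<lambda>_. 0) \<longleftrightarrow> S = 0"
  proof
    assume "piB l A d \<sigma> M = (\<lambda>_. 0)"
    hence "S * delta a a = 0" using P by metis
    thus "S = 0" by (simp add: delta_def)
  qed (simp add: P)
  have "\<not> degenerate_bracket l A d \<sigma> M \<longrightarrow>
         (\<exists>c w. c \<noteq> 0 \<and> set w \<subseteq> {..l} \<and> piB l A d \<sigma> M = (\<lambda>x. c * pmono l A d \<sigma> w x))"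
  proof
    assume nd: "\<not> degenerate_bracket l A d \<sigma> M"
    hence "S \<noteq> 0" using mainl by (simp add: S_def)
    moreover have "piB l A d \<sigma> M = (\<lambda>x. (S * qv powi (- tw l A d \<sigma> (flat M))) * pmono l A d \<sigma> (flat M) x)"
      unfolding P pmono_eq a_def
      by (simp add: fun_eq_iff power_int_minus qv_nz)
    ultimately show "\<exists>c w. c \<noteq> 0 \<and> set w \<subseteq> {..l} \<and> piB l A d \<sigma> M = (\<lambda>x. c * pmono l A d \<sigma> w x)"
      using flat_over[OF assms(4)] qv_nz by (intro exI[of _ "S * qv powi (- tw l A d \<sigma> (flat M))"] exI[of _ "flat M"]) simp
  qed
  thus ?thesis using z mainl by (simp add: S_def)
qed

end
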